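(* Let $k\ge1$ and let $p=(p_1,\dots,p_k)$ be non-principal ultrafilters on $\mathbb N$ with $\{n: n\equiv j \pmod k\}\in p_j$ for each $j$. For a sequence $i=(i_j)_{j\ge1}$ of integers with $i_j\equiv j\pmod k$, put $\alpha_j(i)=\{i_j,i_j+k,\dots,i_{j+k}-k\}$ and $\alpha_\beta(i)=\bigcup_{j\in\beta}\alpha_j(i)$ for $\beta\in\mathscr F_\emptyset$. Let $X$ be a compact metric space and $f:\mathscr F_\emptyset\to X$ an $\mathcal S_k$-sequence. Define $\tilde f_p:\mathscr F_\emptyset\to X$ by $$\tilde f_p(\beta)=\operatorname*{p_1\text{-}lim}_{i_1}\ \operatorname*{p_2\text{-}lim}_{i_2}\cdots\operatorname*{p_k\text{-}lim}_{i_k}\ \operatorname*{p_1\text{-}lim}_{i_{k+1}}\ \operatorname*{p_2\text{-}lim}_{i_{k+2}}\cdots f(\alpha_\beta(i)),$$ where the limit in $i_m$ is taken along $p_{j}$ with $j\in\{1,\dots,k\}$, $j\equiv m\pmod k$, and the iterated limits are over the finitely many indices $i_m$ on which $f(\alpha_\beta(i))$ depends. Then $\tilde f_p$ is an asymptotic $\mathcal S_k$-subsequence of $f$.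
   Context: $\mathscr F$ is the family of finite non-empty subsets of $\mathbb N=\{1,2,\dots\}$, $\mathscr F_\emptyset=\mathscr F\cup\{\emptyset\}$. For $k\ge0$, $\mathcal S_k\subset\mathscr F$ is the family of $\alpha\in\mathscr F$ such that for every $i\in\alpha$, either $i=\max\alpha$ or there is $j\in\alpha$ with $i<j\le i+k$. An $\mathcal S_k$-sequence in $X$ is a map $f:\mathscr F_\emptyset\to X$ (intended to be evaluated on $\mathcal S_k$). Given pairwise disjoint $\alpha_1,\alpha_2,\dots\in\mathscr F$, let $\alpha_\beta=\bigcup_{i\in\beta}\alpha_i$ ($\alpha_\emptyset=\emptyset$). If $l\ge0$ and $\beta\mapsto\alpha_\beta$ maps $\mathcal S_l$ into $\mathcal S_k$, then $\beta\mapsto f(\alpha_\beta)$ ($\beta\in\mathscr F_\emptyset$) is an $\mathcal S_l$-subsequence of the $\mathcal S_k$-sequence $f$. For $X$ compact metric, an asymptotic $\mathcal S_l$-subsequence of $f$ is a map $\mathscr F_\emptyset\to X$ that is the pointwise limit of a sequence of $\mathcal S_l$-subsequences of $f$. For an ultrafilter $q$ on $\mathbb N$ and a map $x:\mathbb N\to X$, $\operatorname{q\text{-}lim}_n x(n)$ is the unique $y\in X$ such that $\{n: x(n)\in V\}\in q$ for every neighbourhood $V$ of $y$. *)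

theory Defs
  imports "HOL-Analysis.Analysis"
begin

text \<open>Natural numbers of the paper: positive elements of nat.
  Fin: non-empty finite subsets of {1,2,...}; Fin0: Fin together with the empty set.\<close>

definition Fin :: "nat set set" where
  "Fin = {a. finite a \<and> a \<noteq> {} \<and> 0 \<notin> a}"

definition Fin0 :: "nat set set" where
  "Fin0 = {a. finite a \<and> 0 \<notin> a}"

definition Sk :: "nat \<Rightarrow> nat set set" where
  "Sk k = {a \<in> Fin. \<forall>i\<in>a. i = Max a \<or> (\<exists>j\<in>a. i < j \<and> j \<le> i + k)}"

definition nat_ultrafilter :: "nat filter \<Rightarrow> bool" where
  "nat_ultrafilter q \<longleftrightarrow> q \<noteq> bot \<and> (\<forall>P. eventually P q \<or> eventually (\<lambda>n. \<not> P n) q)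
      \<and> eventually (\<lambda>n. n \<ge> 1) q"

definition nonprincipal :: "nat filter \<Rightarrow> bool" where
  "nonprincipal q \<longleftrightarrow> (\<forall>m. eventually (\<lambda>n. n \<noteq> m) q)"

definition union_blocks :: "(nat \<Rightarrow> nat set) \<Rightarrow> nat set \<Rightarrow> nat set" where
  "union_blocks a \<beta> = (\<Union>i\<in>\<beta>. a i)"

definition is_subseq :: "nat \<Rightarrow> nat \<Rightarrow> (nat set \<Rightarrow> 'a) \<Rightarrow> (nat set \<Rightarrow> 'a) \<Rightarrow> bool" where
  "is_subseq k l f g \<longleftrightarrow> (\<exists>a::nat \<Rightarrow> nat set.
      (\<forall>i\<ge>1. a i \<in> Fin) \<and>
      (\<forall>i\<ge>1. \<forall>j\<ge>1. i \<noteq> j \<longrightarrow> a i \<inter> a j = {}) \<and>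
      (\<forall>\<beta>\<in>Sk l. union_blocks a \<beta> \<in> Sk k) \<and>
      (\<forall>\<beta>\<in>Fin0. g \<beta> = f (union_blocks a \<beta>)))"

definition is_asymp_subseq :: "nat \<Rightarrow> nat \<Rightarrow> (nat set \<Rightarrow> 'a::topological_space) \<Rightarrow> (nat set \<Rightarrow> 'a) \<Rightarrow> bool" where
  "is_asymp_subseq k l f h \<longleftrightarrow> (\<exists>G::nat \<Rightarrow> nat set \<Rightarrow> 'a.
      (\<forall>n. is_subseq k l f (G n)) \<and>
      (\<forall>\<beta>\<in>Fin0. (\<lambda>n. G n \<beta>) \<longlonglongrightarrow> h \<beta>))"

text \<open>alpha_j(i) = {i_j, i_j + k, ..., i_{j+k} - k}, written as the set of n congruent to j mod k
  with i_j \<le> n < i_{j+k} (equal to the progression since i_j \<equiv> j mod k).\<close>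

definition alpha_i :: "nat \<Rightarrow> (nat \<Rightarrow> nat) \<Rightarrow> nat \<Rightarrow> nat set" where
  "alpha_i k i j = {n. i j \<le> n \<and> n < i (j + k) \<and> n mod k = j mod k}"

definition alpha_beta :: "nat \<Rightarrow> (nat \<Rightarrow> nat) \<Rightarrow> nat set \<Rightarrow> nat set" where
  "alpha_beta k i \<beta> = (\<Union>j\<in>\<beta>. alpha_i k i j)"

definition pidx :: "nat \<Rightarrow> nat \<Rightarrow> nat" where
  "pidx k m = (if m mod k = 0 then k else m mod k)"

fun iter_lim :: "(nat \<Rightarrow> nat filter) \<Rightarrow> nat \<Rightarrow> nat \<Rightarrow> nat \<Rightarrow> ((nat \<Rightarrow> nat) \<Rightarrow> 'a::t2_space)
                   \<Rightarrow> (nat \<Rightarrow> nat) \<Rightarrow> 'a" where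
  "iter_lim p k m 0 g i = g i"
| "iter_lim p k m (Suc r) g i =
     Lim (p (pidx k m)) (\<lambda>n. iter_lim p k (Suc m) r g (i(m := n)))"

text \<open>tilde f_p(beta): iterated limits in i_1, ..., i_N with N = max beta + k, which covers all
  indices on which f(alpha_beta(i)) depends (the initial values of i are irrelevant).\<close>

definition tilde_f :: "(nat \<Rightarrow> nat filter) \<Rightarrow> nat \<Rightarrow> (nat set \<Rightarrow> 'a::t2_space) \<Rightarrow> nat set \<Rightarrow> 'a" where
  "tilde_f p k f \<beta> =
     iter_lim p k 1 (if \<beta> = {} then 0 else Max \<beta> + k) (\<lambda>i. f (alpha_beta k i \<beta>)) (\<lambda>_. 0)"

end

theory Submission
  imports Defs
begin


lemma ulim:
  fixes h :: "nat \<Rightarrow> 'a::metric_space"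
  assumes "nat_ultrafilter q" "compact X" "eventually (\<lambda>x. h x \<in> X) q"
  shows "(h \<longlongrightarrow> Lim q h) q \<and> Lim q h \<in> X"
proof -
  have nb: "q \<noteq> bot" and uf: "\<And>P. eventually P q \<or> eventually (\<lambda>n. \<not> P n) q"
    using assms(1) unfolding nat_ultrafilter_def by auto
  have "filtermap h q \<noteq> bot" by (simp add: filtermap_bot_iff nb)
  moreover have "eventually (\<lambda>x. x \<in> X) (filtermap h q)"
    by (simp add: eventually_filtermap assms(3))
  ultimately obtain L where L: "L \<in> X" "inf (nhds L) (filtermap h q) \<noteq> bot"
    using compact_filter assms(2) by blast
  have t: "(h \<longlongrightarrow> L) q"
  proof (rule topological_tendstoI)
    fix S assume S: "open S" "L \<in> S"
    show "eventually (\<lambda>x. h x \<in> S) q"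
    proof (rule ccontr)
      assume "\<not> ?thesis"
      then have "eventually (\<lambda>x. \<not> h x \<in> S) q" using uf[of "\<lambda>x. h x \<in> S"] by blast
      then have a: "eventually (\<lambda>y. y \<notin> S) (filtermap h q)" by (simp add: eventually_filtermap)
      have b: "eventually (\<lambda>y. y \<in> S) (nhds L)" using S eventually_nhds by blast
      have "eventually (\<lambda>_. False) (inf (nhds L) (filtermap h q))"
        unfolding eventually_inf using a b by blast
      then show False using L(2) by (simp add: eventually_False)
    qed
  qed
  then show ?thesis using tendsto_Lim nb L by metis
qed

lemma pidx_props:
  assumes "k \<ge> 1" shows "pidx k m \<in> {1..k}" "pidx k m mod k = m mod k"
  using assms unfolding pidx_def
  by (auto simp: order_less_imp_le)

lemma modle:
  fixes x y k :: nat
  assumes "x < y" "x mod k = y mod k" "k \<ge> 1"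
  shows "x + k \<le> y"
proof -
  have "k dvd y - x" using assms mod_eq_dvd_iff_nat[of x y k] by (metis less_imp_le mod_eq_dvd_iff_nat)
  then have "k \<le> y - x" using assms by (simp add: dvd_imp_le)
  then show ?thesis using assms by simp
qed

lemma iter_lim_in:
  assumes k: "k \<ge> 1" and uf: "\<And>j. j \<in> {1..k} \<Longrightarrow> nat_ultrafilter (p j)" and cX: "compact X"
  shows "(\<forall>i'. (\<forall>j. j < m \<or> m + r \<le> j \<longrightarrow> i' j = i j) \<longrightarrow> (\<forall>j. m \<le> j \<and> j < m + r \<longrightarrow> 1 \<le> i' j) \<longrightarrow> g i' \<in> X)
     \<Longrightarrow> iter_lim p k m r g i \<in> (X :: 'a::metric_space set)"
proof (induction r arbitrary: m i)
  case 0
  then show ?case by auto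
next
  case (Suc r)
  let ?q = "p (pidx k m)"
  have uq: "nat_ultrafilter ?q" using uf pidx_props(1)[OF k] by blast
  have e1: "eventually (\<lambda>x. 1 \<le> x) ?q" using uq unfolding nat_ultrafilter_def by auto
  have "eventually (\<lambda>x. iter_lim p k (Suc m) r g (i(m:=x)) \<in> X) ?q"
  proof (rule eventually_mono[OF e1])
    fix x :: nat assume x: "1 \<le> x"
    show "iter_lim p k (Suc m) r g (i(m:=x)) \<in> X"
    proof (rule Suc.IH, intro allI impI)
      fix i' assume a1: "\<forall>j. j < Suc m \<or> Suc m + r \<le> j \<longrightarrow> i' j = (i(m := x)) j"
        and a2: "\<forall>j. Suc m \<le> j \<and> j < Suc m + r \<longrightarrow> 1 \<le> i' j"
      have b1: "\<forall>j. j < m \<or> m + Suc r \<le> j \<longrightarrow> i' j = i j" using a1 by auto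
      have b2: "\<forall>j. m \<le> j \<and> j < m + Suc r \<longrightarrow> 1 \<le> i' j"
      proof (intro allI impI)
        fix j assume "m \<le> j \<and> j < m + Suc r"
        then show "1 \<le> i' j" using a1 a2 x by (cases "j = m") auto
      qed
      show "g i' \<in> X" using Suc.prems b1 b2 by blast
    qed
  qed
  then show ?case using ulim[OF uq cX] by simp
qed

lemma alpha_in_Fin0:
  assumes "finite \<beta>" "\<forall>j\<in>\<beta>. 1 \<le> i j"
  shows "alpha_beta k i \<beta> \<in> Fin0"
proof -
  have "alpha_i k i j \<subseteq> {..< i (j+k)}" for j unfolding alpha_i_def by auto
  then have "finite (alpha_i k i j)" for j using finite_subset by blast
  then have "finite (alpha_beta k i \<beta>)" unfolding alpha_beta_def using assms(1) by blast
  moreover have "0 \<notin> alpha_beta k i \<beta>" using assms(2) unfolding alpha_beta_def alpha_i_def by fastforce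
  ultimately show ?thesis unfolding Fin0_def by blast
qed

lemma alpha_cong:
  assumes "\<forall>j\<in>\<beta>. i j = i' j \<and> i (j+k) = i' (j+k)"
  shows "alpha_beta k i \<beta> = alpha_beta k i' \<beta>"
  using assms unfolding alpha_beta_def alpha_i_def by auto



lemma subseq_ok:
  fixes i :: "nat \<Rightarrow> nat" and f :: "nat set \<Rightarrow> 'a"
  assumes k: "k \<ge> 1" and inc: "\<And>m. i m < i (Suc m)" and res: "\<And>j. j \<ge> 1 \<Longrightarrow> i j mod k = j mod k"
  shows "is_subseq k k f (\<lambda>\<beta>. f (alpha_beta k i \<beta>))"
proof -
  have sm: "strict_mono i" using inc strict_mono_Suc_iff by blast
  have le: "\<And>a b. a \<le> b \<Longrightarrow> i a \<le> i b" using sm strict_mono_less_eq by blast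
  have lt: "\<And>a b. a < b \<Longrightarrow> i a < i b" using sm strict_monoD by blast
  have pos: "\<And>j. j \<ge> 1 \<Longrightarrow> i j \<ge> 1" using lt by (metis less_one not_less gr0I le_trans less_imp_le_nat linorder_not_le)
  define a where "a = alpha_i k i"
  have mem: "\<And>x j. x \<in> a j \<longleftrightarrow> i j \<le> x \<and> x < i (j+k) \<and> x mod k = j mod k"
    by (simp add: a_def alpha_i_def)
  have fina: "finite (a j)" for j
  proof -
    have "a j \<subseteq> {..< i (j+k)}" using mem by auto
    then show ?thesis using finite_subset by blast
  qed
  have ija: "j \<ge> 1 \<Longrightarrow> i j \<in> a j" for j using mem lt[of j "j+k"] k res by auto
  have A1: "\<forall>j\<ge>1. a j \<in> Fin"
  proof (intro allI impI)
    fix j :: nat assume j: "1 \<le> j"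
    have "0 \<notin> a j" using mem pos[OF j] by (metis le_zero_eq not_one_le_zero)
    then show "a j \<in> Fin" unfolding Fin_def using fina ija[OF j] by blast
  qed
  have A2: "\<forall>j\<ge>1. \<forall>j'\<ge>1. j \<noteq> j' \<longrightarrow> a j \<inter> a j' = {}"
  proof (intro allI impI)
    fix j j' :: nat assume j: "1 \<le> j" "1 \<le> j'" "j \<noteq> j'"
    show "a j \<inter> a j' = {}"
    proof (rule ccontr)
      assume "a j \<inter> a j' \<noteq> {}"
      then obtain x where x: "x \<in> a j" "x \<in> a j'" by blast
      then have md: "j mod k = j' mod k" using mem by auto
      show False
      proof (cases "j < j'")
        case True
        then have "j + k \<le> j'" using modle md k by blast
        then show False using x mem le by (meson leD le_trans)
      next
        case False
        then have "j' < j" using j by simp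
        then have "j' + k \<le> j" using modle md k by metis
        then show False using x mem le by (meson leD le_trans)
      qed
    qed
  qed
  have ub: "union_blocks a \<beta> = alpha_beta k i \<beta>" for \<beta>
    unfolding union_blocks_def alpha_beta_def a_def by simp
  have A3: "\<forall>\<beta>\<in>Sk k. union_blocks a \<beta> \<in> Sk k"
  proof
    fix \<beta> assume b: "\<beta> \<in> Sk k"
    let ?U = "union_blocks a \<beta>"
    have bF: "finite \<beta>" "\<beta> \<noteq> {}" "0 \<notin> \<beta>"
      and bS: "\<forall>j\<in>\<beta>. j = Max \<beta> \<or> (\<exists>j'\<in>\<beta>. j < j' \<and> j' \<le> j + k)"
      using b unfolding Sk_def Fin_def by auto
    have b1: "\<And>j. j \<in> \<beta> \<Longrightarrow> 1 \<le> j" using bF(3) by (metis less_one not_less)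
    have Uf: "finite ?U" unfolding union_blocks_def using bF(1) fina by blast
    have Umem: "\<And>x. x \<in> ?U \<longleftrightarrow> (\<exists>j\<in>\<beta>. x \<in> a j)" unfolding union_blocks_def by blast
    have UF: "?U \<in> Fin"
    proof -
      obtain j where "j \<in> \<beta>" using bF(2) by blast
      then have "?U \<noteq> {}" using ija b1 Umem by blast
      moreover have "0 \<notin> ?U" using A1 b1 Umem unfolding Fin_def by blast
      ultimately show ?thesis using Uf unfolding Fin_def by blast
    qed
    have "\<forall>x\<in>?U. x = Max ?U \<or> (\<exists>y\<in>?U. x < y \<and> y \<le> x + k)"
    proof
      fix x assume "x \<in> ?U"
      then obtain j where j: "j \<in> \<beta>" "x \<in> a j" using Umem by blast
      have xm: "i j \<le> x" "x < i (j+k)" "x mod k = j mod k" using j(2) mem by auto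
      show "x = Max ?U \<or> (\<exists>y\<in>?U. x < y \<and> y \<le> x + k)"
      proof (cases "x + k < i (j+k)")
        case True
        have "x + k \<in> a j" using mem xm True by simp
        then have "x + k \<in> ?U" using j(1) Umem by blast
        moreover have "x < x + k" using k by simp
        ultimately show ?thesis by blast
      next
        case False
        have "i (j+k) mod k = j mod k" using res[of "j+k"] b1[OF j(1)] by simp
        then have "x + k \<le> i (j+k)" using modle[of x "i (j+k)" k] xm k by simp
        then have xk: "x + k = i (j+k)" using False by simp
        have dis: "j = Max \<beta> \<or> (\<exists>j'\<in>\<beta>. j < j' \<and> j' \<le> j + k)" using bS j(1) by blast
        from dis show ?thesis
        proof
          assume jM: "j = Max \<beta>"
          have "Max ?U = x"
          proof (rule Max_eqI[OF Uf])
            show "x \<in> ?U" using j Umem by blast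
          next
            fix z assume "z \<in> ?U"
            then obtain j'' where j'': "j'' \<in> \<beta>" "z \<in> a j''" using Umem by blast
            have "j'' \<le> j" using jM j'' bF(1) by simp
            have zm: "z < i (j''+k)" "z mod k = j'' mod k" using j''(2) mem by auto
            have "i (j''+k) mod k = j'' mod k" using res[of "j''+k"] b1[OF j''(1)] by simp
            then have "z + k \<le> i (j''+k)" using modle[of z "i (j''+k)" k] zm k by simp
            moreover have "i (j''+k) \<le> i (j+k)" using le \<open>j'' \<le> j\<close> by simp
            ultimately show "z \<le> x" using xk by simp
          qed
          then show ?thesis by simp
        next
          assume "\<exists>j'\<in>\<beta>. j < j' \<and> j' \<le> j + k"
          then obtain j' where j': "j' \<in> \<beta>" "j < j'" "j' \<le> j + k" by blast
          define d where "d = x + k - i j'"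
          define y where "y = i j' + k * (d div k)"
          have ij': "i j' \<le> x + k" using le[OF j'(3)] xk by simp
          have d1: "i j' + d = x + k" using ij' d_def by simp
          have d2: "k * (d div k) \<le> d" by simp
          have d3: "d < k * (d div k) + k"
          proof -
            have "d mod k < k" using k by simp
            moreover have "d = k * (d div k) + d mod k" by simp
            ultimately show ?thesis by linarith
          qed
          have y1: "x < y" using d1 d3 y_def by simp
          have y2: "y \<le> x + k" using d1 d2 y_def by linarith
          have "y mod k = i j' mod k" unfolding y_def by simp
          also have "\<dots> = j' mod k" using res b1[OF j'(1)] by simp
          finally have y3: "y mod k = j' mod k" .
          have y4: "i j' \<le> y" unfolding y_def by simp
          have "i (j+k) < i (j'+k)" using lt j'(2) by simp
          then have y5: "y < i (j'+k)" using y2 xk by simp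
          have "y \<in> a j'" using mem y3 y4 y5 by simp
          then show ?thesis using j'(1) Umem y1 y2 by blast
        qed
      qed
    qed
    then show "?U \<in> Sk k" using UF unfolding Sk_def by blast
  qed
  have A4: "\<forall>\<beta>\<in>Fin0. f (alpha_beta k i \<beta>) = f (union_blocks a \<beta>)" using ub by simp
  show ?thesis unfolding is_subseq_def using A1 A2 A3 A4 by blast
qed



definition Nb :: "nat \<Rightarrow> nat set \<Rightarrow> nat" where
  "Nb k \<beta> = (if \<beta> = {} then 0 else Max \<beta> + k)"

definition Lv :: "(nat \<Rightarrow> nat filter) \<Rightarrow> nat \<Rightarrow> (nat set \<Rightarrow> 'a::t2_space) \<Rightarrow> nat \<Rightarrow> nat set \<Rightarrow> (nat \<Rightarrow> nat) \<Rightarrow> 'a" where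
  "Lv p k f m \<beta> s = iter_lim p k (Suc m) (Nb k \<beta> - m) (\<lambda>i. f (alpha_beta k i \<beta>)) s"

definition Qc :: "(nat \<Rightarrow> nat filter) \<Rightarrow> nat \<Rightarrow> (nat set \<Rightarrow> 'a::metric_space) \<Rightarrow> nat \<Rightarrow> nat \<Rightarrow> (nat \<Rightarrow> nat) \<Rightarrow> nat \<Rightarrow> bool" where
  "Qc p k f n m s x \<longleftrightarrow> 1 \<le> x \<and> x mod k = Suc m mod k \<and> s m < x \<and>
     (\<forall>\<beta>\<in>Pow {1..n}. dist (Lv p k f (Suc m) \<beta> (s(Suc m := x))) (tilde_f p k f \<beta>) < 1 / real (Suc n))"

primrec st :: "(nat \<Rightarrow> nat filter) \<Rightarrow> nat \<Rightarrow> (nat set \<Rightarrow> 'a::metric_space) \<Rightarrow> nat \<Rightarrow> nat \<Rightarrow> nat \<Rightarrow> nat" where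
  "st p k f n 0 = (\<lambda>_. 0)"
| "st p k f n (Suc m) = (st p k f n m)(Suc m := SOME x. Qc p k f n m (st p k f n m) x)"

lemma QcD:
  assumes "Qc p k f n m s x"
  shows "1 \<le> x" "x mod k = Suc m mod k" "s m < x"
    "\<forall>\<beta>\<in>Pow {1..n}. dist (Lv p k f (Suc m) \<beta> (s(Suc m := x))) (tilde_f p k f \<beta>) < 1 / real (Suc n)"
  using assms unfolding Qc_def by auto

lemma tilde_Lv: "tilde_f p k f \<beta> = Lv p k f 0 \<beta> (\<lambda>_. 0)"
  unfolding tilde_f_def Lv_def Nb_def by simp

lemma Nb_ge: "finite \<beta> \<Longrightarrow> j \<in> \<beta> \<Longrightarrow> j + k \<le> Nb k \<beta>"
  unfolding Nb_def by auto

lemma step_exists: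
  fixes X :: "'a::metric_space set" and f :: "nat set \<Rightarrow> 'a"
  assumes k: "k \<ge> 1"
    and uf: "\<And>j. j \<in> {1..k} \<Longrightarrow> nat_ultrafilter (p j) \<and> nonprincipal (p j)"
    and rs: "\<And>j. j \<in> {1..k} \<Longrightarrow> eventually (\<lambda>n. n mod k = j mod k) (p j)"
    and cX: "compact X"
    and fX: "\<And>\<beta>. \<beta> \<in> Fin0 \<Longrightarrow> f \<beta> \<in> X"
    and inv1: "\<forall>j\<in>{1..m}. 1 \<le> s j"
    and inv2: "\<forall>\<beta>\<in>Pow {1..n}. dist (Lv p k f m \<beta> s) (tilde_f p k f \<beta>) < 1 / real (Suc n)"
  shows "\<exists>x. Qc p k f n m s x"
proof -
  let ?j = "pidx k (Suc m)"
  have jr: "?j \<in> {1..k}" using pidx_props(1)[OF k] .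
  let ?q = "p ?j"
  have uq: "nat_ultrafilter ?q" "nonprincipal ?q" using uf jr by auto
  have nb: "?q \<noteq> bot" using uq unfolding nat_ultrafilter_def by auto
  have e1: "eventually (\<lambda>x. 1 \<le> x) ?q" using uq unfolding nat_ultrafilter_def by auto
  have e2: "eventually (\<lambda>x. x mod k = Suc m mod k) ?q"
    using rs[OF jr] pidx_props(2)[OF k, of "Suc m"] by simp
  have "\<forall>c\<in>{..s m}. eventually (\<lambda>x. x \<noteq> c) ?q" using uq(2) unfolding nonprincipal_def by blast
  then have "eventually (\<lambda>x. \<forall>c\<in>{..s m}. x \<noteq> c) ?q" by (rule eventually_ball_finite[rotated]) simp
  then have e3: "eventually (\<lambda>x. s m < x) ?q"
    by (rule eventually_mono) (use not_less in auto)
  let ?e = "1 / real (Suc n)"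
  have e4: "\<forall>\<beta>\<in>Pow {1..n}. eventually (\<lambda>x. dist (Lv p k f (Suc m) \<beta> (s(Suc m := x))) (tilde_f p k f \<beta>) < ?e) ?q"
  proof
    fix \<beta> assume \<beta>: "\<beta> \<in> Pow {1..n}"
    have bfin: "finite \<beta>" using \<beta> finite_subset by auto
    have b1: "\<And>j. j \<in> \<beta> \<Longrightarrow> 1 \<le> j" using \<beta> by auto
    define h where "h x = Lv p k f (Suc m) \<beta> (s(Suc m := x))" for x
    have d0: "dist (Lv p k f m \<beta> s) (tilde_f p k f \<beta>) < ?e" using inv2 \<beta> by blast
    show "eventually (\<lambda>x. dist (h x) (tilde_f p k f \<beta>) < ?e) ?q"
      unfolding h_def[symmetric]
    proof (cases "m < Nb k \<beta>")
      case True
      have Lm: "Lv p k f m \<beta> s = Lim ?q h"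
      proof -
        have "Nb k \<beta> - m = Suc (Nb k \<beta> - Suc m)" using True by simp
        then show ?thesis unfolding Lv_def h_def by simp
      qed
      have hX: "eventually (\<lambda>x. h x \<in> X) ?q"
      proof (rule eventually_mono[OF e1])
        fix x :: nat assume x: "1 \<le> x"
        show "h x \<in> X" unfolding h_def Lv_def
        proof (rule iter_lim_in[where p=p and X=X], rule k, use uf in blast, rule cX, intro allI impI)
          fix i' assume a1: "\<forall>j. j < Suc (Suc m) \<or> Suc (Suc m) + (Nb k \<beta> - Suc m) \<le> j \<longrightarrow> i' j = (s(Suc m := x)) j"
            and a2: "\<forall>j. Suc (Suc m) \<le> j \<and> j < Suc (Suc m) + (Nb k \<beta> - Suc m) \<longrightarrow> 1 \<le> i' j"
          have "\<forall>j\<in>\<beta>. 1 \<le> i' j"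
          proof
            fix j assume j: "j \<in> \<beta>"
            have jN: "j < Suc (Suc m) + (Nb k \<beta> - Suc m)" using Nb_ge[OF bfin j, of k] k True by simp
            show "1 \<le> i' j"
            proof (cases "j < Suc (Suc m)")
              case True
              then show ?thesis using a1 x inv1 b1[OF j] by (cases "j = Suc m") auto
            next
              case False
              then show ?thesis using a2 jN by simp
            qed
          qed
          then show "f (alpha_beta k i' \<beta>) \<in> X" using fX alpha_in_Fin0 bfin by blast
        qed
      qed
      have t: "(h \<longlongrightarrow> Lim ?q h) ?q" using ulim[OF uq(1) cX hX] by blast
      define r where "r = ?e - dist (Lim ?q h) (tilde_f p k f \<beta>)"
      have "r > 0" using d0 Lm r_def by simp
      then have "eventually (\<lambda>x. dist (h x) (Lim ?q h) < r) ?q" using t tendsto_iff by blast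
      then show "eventually (\<lambda>x. dist (h x) (tilde_f p k f \<beta>) < ?e) ?q"
      proof (rule eventually_mono)
        fix x assume "dist (h x) (Lim ?q h) < r"
        moreover have "dist (h x) (tilde_f p k f \<beta>) \<le> dist (h x) (Lim ?q h) + dist (Lim ?q h) (tilde_f p k f \<beta>)"
          by (rule dist_triangle)
        ultimately show "dist (h x) (tilde_f p k f \<beta>) < ?e" using r_def by simp
      qed
    next
      case False
      have "h x = Lv p k f m \<beta> s" for x
      proof -
        have "alpha_beta k (s(Suc m := x)) \<beta> = alpha_beta k s \<beta>"
        proof (rule alpha_cong, intro ballI)
          fix j assume j: "j \<in> \<beta>"
          have "j + k \<le> m" using Nb_ge[OF bfin j, of k] False by simp
          then show "(s(Suc m := x)) j = s j \<and> (s(Suc m := x)) (j + k) = s (j + k)" by simp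
        qed
        then show ?thesis using False unfolding h_def Lv_def by simp
      qed
      then show ?thesis using d0 by simp
    qed
  qed
  have e5: "eventually (\<lambda>x. \<forall>\<beta>\<in>Pow {1..n}. dist (Lv p k f (Suc m) \<beta> (s(Suc m := x))) (tilde_f p k f \<beta>) < ?e) ?q"
    by (rule eventually_ball_finite[OF _ e4]) simp
  have "eventually (\<lambda>x. Qc p k f n m s x) ?q"
    unfolding Qc_def using eventually_conj[OF e1 eventually_conj[OF e2 eventually_conj[OF e3 e5]]] by simp
  then show ?thesis using eventually_happens'[OF nb] by blast
qed



theorem lemma3p2:
  fixes k :: nat and p :: "nat \<Rightarrow> nat filter"
    and X :: "'a::metric_space set" and f :: "nat set \<Rightarrow> 'a"
  assumes "k \<ge> 1"
    and "\<And>j. j \<in> {1..k} \<Longrightarrow> nat_ultrafilter (p j) \<and> nonprincipal (p j)"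
    and "\<And>j. j \<in> {1..k} \<Longrightarrow> eventually (\<lambda>n. n mod k = j mod k) (p j)"
    and "compact X"
    and "\<And>\<beta>. \<beta> \<in> Fin0 \<Longrightarrow> f \<beta> \<in> X"
  shows "is_asymp_subseq k k f (tilde_f p k f)"
proof -
  note k = assms(1)
  have inv: "(\<forall>j\<in>{1..m}. 1 \<le> st p k f n m j) \<and>
      (\<forall>\<beta>\<in>Pow {1..n}. dist (Lv p k f m \<beta> (st p k f n m)) (tilde_f p k f \<beta>) < 1 / real (Suc n))" for n m
  proof (induction m)
    case 0
    show ?case by (simp add: tilde_Lv[symmetric])
  next
    case (Suc m)
    let ?s = "st p k f n m"
    have ex: "\<exists>x. Qc p k f n m ?s x" by (rule step_exists[of k p X f]) (use assms Suc.IH in auto)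
    let ?x = "SOME x. Qc p k f n m ?s x"
    have Q: "Qc p k f n m ?s ?x" using someI_ex[OF ex] .
    have "\<forall>j\<in>{1..Suc m}. 1 \<le> (?s(Suc m := ?x)) j"
      using QcD(1)[OF Q] Suc.IH by auto
    then show ?case unfolding st.simps(2) using QcD(4)[OF Q] by blast
  qed
  have Qs: "Qc p k f n m (st p k f n m) (st p k f n (Suc m) (Suc m))" for n m
  proof -
    have ex: "\<exists>x. Qc p k f n m (st p k f n m) x" by (rule step_exists[of k p X f]) (use assms inv in auto)
    then show ?thesis using someI_ex[OF ex] by simp
  qed
  define I where "I n j = st p k f n j j" for n j
  have agree: "j \<le> m \<Longrightarrow> st p k f n m j = I n j" for n m j
  proof (induction m)
    case 0 then show ?case by (simp add: I_def)
  next
    case (Suc m) then show ?case by (cases "j = Suc m") (auto simp: I_def)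
  qed
  have inc: "I n m < I n (Suc m)" for n m
    using QcD(3)[OF Qs[of n m]] agree[of m m n] unfolding I_def by simp
  have res: "j \<ge> 1 \<Longrightarrow> I n j mod k = j mod k" for n j
  proof -
    assume "j \<ge> 1"
    then obtain m where m: "j = Suc m" by (cases j) auto
    show ?thesis using QcD(2)[OF Qs[of n m]] unfolding I_def m by simp
  qed
  have approx: "\<beta> \<in> Pow {1..n} \<Longrightarrow> dist (f (alpha_beta k (I n) \<beta>)) (tilde_f p k f \<beta>) < 1 / real (Suc n)" for n \<beta>
  proof -
    assume \<beta>: "\<beta> \<in> Pow {1..n}"
    have bfin: "finite \<beta>" using \<beta> finite_subset by auto
    let ?m = "Nb k \<beta>"
    have "dist (Lv p k f ?m \<beta> (st p k f n ?m)) (tilde_f p k f \<beta>) < 1 / real (Suc n)" using inv \<beta> by blast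
    moreover have "Lv p k f ?m \<beta> (st p k f n ?m) = f (alpha_beta k (st p k f n ?m) \<beta>)"
      unfolding Lv_def by simp
    moreover have "alpha_beta k (st p k f n ?m) \<beta> = alpha_beta k (I n) \<beta>"
    proof (rule alpha_cong, intro ballI)
      fix j assume j: "j \<in> \<beta>"
      have "j + k \<le> ?m" using Nb_ge[OF bfin j] .
      then show "st p k f n ?m j = I n j \<and> st p k f n ?m (j + k) = I n (j + k)" using agree by simp
    qed
    ultimately show ?thesis by simp
  qed
  define G where "G n \<beta> = f (alpha_beta k (I n) \<beta>)" for n \<beta>
  have sub: "is_subseq k k f (G n)" for n
    unfolding G_def by (rule subseq_ok[OF k inc res])
  have conv: "(\<lambda>n. G n \<beta>) \<longlonglongrightarrow> tilde_f p k f \<beta>" if \<beta>: "\<beta> \<in> Fin0" for \<beta>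
  proof (rule metric_LIMSEQ_I)
    fix r :: real assume r: "0 < r"
    obtain N where N: "inverse (real (Suc N)) < r" using reals_Archimedean[OF r] by blast
    have bfin: "finite \<beta>" "0 \<notin> \<beta>" using \<beta> unfolding Fin0_def by auto
    define M where "M = (if \<beta> = {} then 0 else Max \<beta>)"
    have bM: "\<beta> \<subseteq> {1..M}" using bfin unfolding M_def by (auto simp: Suc_le_eq gr0I)
    show "\<exists>no. \<forall>n\<ge>no. dist (G n \<beta>) (tilde_f p k f \<beta>) < r"
    proof (intro exI allI impI)
      fix n assume n: "max N M \<le> n"
      have "\<beta> \<in> Pow {1..n}" using bM n by auto
      then have "dist (G n \<beta>) (tilde_f p k f \<beta>) < 1 / real (Suc n)" using approx G_def by simp
      also have "\<dots> \<le> inverse (real (Suc N))" using n by (simp add: divide_inverse frac_le)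
      also have "\<dots> < r" by (rule N)
      finally show "dist (G n \<beta>) (tilde_f p k f \<beta>) < r" .
    qed
  qed
  show ?thesis unfolding is_asymp_subseq_def using sub conv by blast
qed

end
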